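(* Let $\mathcal{X},\mathcal{Y},\hat{\mathcal{X}}$ be finite sets with $T:=|\hat{\mathcal{X}}|$, let $p(y|x)p(x)$ be a joint distribution with $p(x)>0$ for all $x$, let $\beta>0$, and let $\big(p_\beta(y|\hat x),p_\beta(\hat x)\big)$ be an IB root at $\beta$ with no vanishing coordinates. Define the square matrix $S$ of order $T|\mathcal{Y}|$, with rows and columns indexed by pairs, by $$S_{(y,\hat x),(y',\hat x')}:=\sum_x p_\beta(x|\hat x)\Big[\beta\tfrac{p(y|x)}{p_\beta(y|\hat x)}+(1-2\beta)\Big]p(y'|x)\Big[\delta_{\hat x,\hat x'}-p_\beta(\hat x'|x)\Big].$$ Then $\dim\ker(I-S)=\dim\ker(I-J)$, where $J$ is the matrix defined in the context and $I$ denotes the identity of the respective order. Moreover, the map $\bm v=(v_{y,\hat x})_{y,\hat x}\mapsto(\bm v,\bm u)$ with $u_{\hat x}:=\frac{1-\beta}{\beta}\sum_y v_{y,\hat x}$ is a bijection from the set of left eigenvectors of $S$ for the eigenvalue $1$ (the left kernel of $I-S$) onto the left kernel of $I-J$.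
   Context: An IB root at $\beta$ is an encoder $p(\hat x|x)$, decoder $p(y|\hat x)$ and marginal $p(\hat x)$ with $p(\hat x|x)=\frac{p(\hat x)}{Z(x,\beta)}\exp\{-\beta D_{KL}[p(\cdot|x)\|p(\cdot|\hat x)]\}$, $Z(x,\beta)$ the normalizer, $p(y|\hat x)=\sum_x p(y|x)p(x|\hat x)$ where $p(x|\hat x)=p(\hat x|x)p(x)/p(\hat x)$, and $p(\hat x)=\sum_xp(\hat x|x)p(x)$; $p_\beta(\hat x|x)$, $p_\beta(x|\hat x)$ denote the encoder and inverse encoder of the given root; $\delta$ is the Kronecker delta. Define $A(\hat x,\hat x')=\sum_x p_\beta(\hat x'|x)p_\beta(x|\hat x)$, $B(\hat x,\hat x')_y=\sum_x p(y|x)p_\beta(\hat x'|x)p_\beta(x|\hat x)$, $C(\hat x,\hat x')_{y,y'}=\sum_x p(y|x)p(y'|x)p_\beta(\hat x'|x)p_\beta(x|\hat x)$. $J$ is the square matrix of order $T(|\mathcal{Y}|+1)$ with rows indexed by pairs $(y,\hat x)$ then indices $\hat x$, columns by $(y',\hat x')$ then $\hat x'$, with entries: row $(y,\hat x)$, column $(y',\hat x')$: $\beta\sum_{\hat x'',y''}(\delta_{\hat x'',\hat x'}-\delta_{\hat x,\hat x'})\big[1-\tfrac{\delta_{y'',y}}{p_\beta(y|\hat x)}\big]C(\hat x,\hat x'')_{y',y''}$; row $(y,\hat x)$, column $\hat x'$: $(1-\beta)\sum_{y''}\big[1-\tfrac{\delta_{y'',y}}{p_\beta(y|\hat x)}\big]B(\hat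 x,\hat x')_{y''}$; row $\hat x$, column $(y',\hat x')$: $\beta[\delta_{\hat x,\hat x'}p_\beta(y'|\hat x)-B(\hat x,\hat x')_{y'}]$; row $\hat x$, column $\hat x'$: $(1-\beta)[\delta_{\hat x,\hat x'}-A(\hat x,\hat x')]$. (This is the Jacobian of one Blahut–Arimoto IB iteration in log-decoder coordinates at the root.) The left kernel of a matrix $M$ is $\{\bm w:\bm w^{\top}M=0\}$. *)

theory Defs
  imports "HOL-Analysis.Analysis"
begin

text \<open>Types: 'x = source alphabet X, 'y = relevant alphabet Y,
 't = compressed alphabet Xhat (all finite, nonempty).
 pyx x y = p(y|x), px x = p(x); enc x t = p_beta(t|x); dec t y = p_beta(y|t);
 marg t = p_beta(t).\<close>

definition kron :: "'a \<Rightarrow> 'a \<Rightarrow> real" where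
  "kron a b = (if a = b then 1 else 0)"

definition KL :: "('y::finite \<Rightarrow> real) \<Rightarrow> ('y \<Rightarrow> real) \<Rightarrow> real" where
  "KL p q = (\<Sum>y\<in>UNIV. if p y = 0 then 0 else p y * ln (p y / q y))"

definition is_joint_distribution :: "('x::finite \<Rightarrow> 'y::finite \<Rightarrow> real) \<Rightarrow> ('x \<Rightarrow> real) \<Rightarrow> bool" where
  "is_joint_distribution pyx px \<longleftrightarrow>
     (\<forall>x. px x \<ge> 0) \<and> (\<Sum>x\<in>UNIV. px x) = 1 \<and>
     (\<forall>x y. pyx x y \<ge> 0) \<and> (\<forall>x. (\<Sum>y\<in>UNIV. pyx x y) = 1)"

definition inv_enc :: "('x::finite \<Rightarrow> real) \<Rightarrow> ('x \<Rightarrow> 't \<Rightarrow> real) \<Rightarrow> ('t \<Rightarrow> real) \<Rightarrow> 't \<Rightarrow> 'x \<Rightarrow> real" where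
  "inv_enc px enc marg t x = enc x t * px x / marg t"

definition IB_Z :: "real \<Rightarrow> ('x::finite \<Rightarrow> 'y::finite \<Rightarrow> real) \<Rightarrow> ('t::finite \<Rightarrow> 'y \<Rightarrow> real) \<Rightarrow> ('t \<Rightarrow> real) \<Rightarrow> 'x \<Rightarrow> real" where
  "IB_Z \<beta> pyx dec marg x = (\<Sum>t\<in>UNIV. marg t * exp (- \<beta> * KL (pyx x) (dec t)))"

definition is_IB_root :: "real \<Rightarrow> ('x::finite \<Rightarrow> 'y::finite \<Rightarrow> real) \<Rightarrow> ('x \<Rightarrow> real) \<Rightarrow>
   ('x \<Rightarrow> 't::finite \<Rightarrow> real) \<Rightarrow> ('t \<Rightarrow> 'y \<Rightarrow> real) \<Rightarrow> ('t \<Rightarrow> real) \<Rightarrow> bool" where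
  "is_IB_root \<beta> pyx px enc dec marg \<longleftrightarrow>
     (\<forall>x t. enc x t = marg t / IB_Z \<beta> pyx dec marg x * exp (- \<beta> * KL (pyx x) (dec t))) \<and>
     (\<forall>t y. dec t y = (\<Sum>x\<in>UNIV. pyx x y * inv_enc px enc marg t x)) \<and>
     (\<forall>t. marg t = (\<Sum>x\<in>UNIV. enc x t * px x))"

definition IB_A :: "('x::finite \<Rightarrow> real) \<Rightarrow> ('x \<Rightarrow> 't \<Rightarrow> real) \<Rightarrow> ('t \<Rightarrow> real) \<Rightarrow> 't \<Rightarrow> 't \<Rightarrow> real" where
  "IB_A px enc marg t t' = (\<Sum>x\<in>UNIV. enc x t' * inv_enc px enc marg t x)"

definition IB_B :: "('x::finite \<Rightarrow> 'y \<Rightarrow> real) \<Rightarrow> ('x \<Rightarrow> real) \<Rightarrow> ('x \<Rightarrow> 't \<Rightarrow> real) \<Rightarrow> ('t \<Rightarrow> real) \<Rightarrow> 't \<Rightarrow> 't \<Rightarrow> 'y \<Rightarrow> real" where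
  "IB_B pyx px enc marg t t' y = (\<Sum>x\<in>UNIV. pyx x y * enc x t' * inv_enc px enc marg t x)"

definition IB_C :: "('x::finite \<Rightarrow> 'y \<Rightarrow> real) \<Rightarrow> ('x \<Rightarrow> real) \<Rightarrow> ('x \<Rightarrow> 't \<Rightarrow> real) \<Rightarrow> ('t \<Rightarrow> real) \<Rightarrow> 't \<Rightarrow> 't \<Rightarrow> 'y \<Rightarrow> 'y \<Rightarrow> real" where
  "IB_C pyx px enc marg t t' y y' = (\<Sum>x\<in>UNIV. pyx x y * pyx x y' * enc x t' * inv_enc px enc marg t x)"

text \<open>The Jacobian J, indexed by ('y \<times> 't) + 't: Inl (y,t) are the pairs, Inr t the indices t.\<close>
definition IB_J :: "real \<Rightarrow> ('x::finite \<Rightarrow> 'y::finite \<Rightarrow> real) \<Rightarrow> ('x \<Rightarrow> real) \<Rightarrow>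
   ('x \<Rightarrow> 't::finite \<Rightarrow> real) \<Rightarrow> ('t \<Rightarrow> 'y \<Rightarrow> real) \<Rightarrow> ('t \<Rightarrow> real) \<Rightarrow> real^(('y \<times> 't) + 't)^(('y \<times> 't) + 't)" where
  "IB_J \<beta> pyx px enc dec marg = (\<chi> r c.
     (case r of
        Inl (y, t) \<Rightarrow>
          (case c of
             Inl (y', t') \<Rightarrow> \<beta> * (\<Sum>t''\<in>UNIV. \<Sum>y''\<in>UNIV.
                 (kron t'' t' - kron t t') * (1 - kron y'' y / dec t y) * IB_C pyx px enc marg t t'' y' y'')
           | Inr t' \<Rightarrow> (1 - \<beta>) * (\<Sum>y''\<in>UNIV. (1 - kron y'' y / dec t y) * IB_B pyx px enc marg t t' y''))
      | Inr t \<Rightarrow>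
          (case c of
             Inl (y', t') \<Rightarrow> \<beta> * (kron t t' * dec t y' - IB_B pyx px enc marg t t' y')
           | Inr t' \<Rightarrow> (1 - \<beta>) * (kron t t' - IB_A px enc marg t t'))))"

definition IB_S :: "real \<Rightarrow> ('x::finite \<Rightarrow> 'y::finite \<Rightarrow> real) \<Rightarrow> ('x \<Rightarrow> real) \<Rightarrow>
   ('x \<Rightarrow> 't::finite \<Rightarrow> real) \<Rightarrow> ('t \<Rightarrow> 'y \<Rightarrow> real) \<Rightarrow> ('t \<Rightarrow> real) \<Rightarrow> real^('y \<times> 't)^('y \<times> 't)" where
  "IB_S \<beta> pyx px enc dec marg = (\<chi> r c. case r of (y, t) \<Rightarrow> case c of (y', t') \<Rightarrow>
     (\<Sum>x\<in>UNIV. inv_enc px enc marg t x * (\<beta> * pyx x y / dec t y + (1 - 2 * \<beta>))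
        * pyx x y' * (kron t t' - enc x t')))"

definition right_kernel :: "real^'n^'m \<Rightarrow> (real^'n) set" where
  "right_kernel M = {v. M *v v = 0}"

definition left_kernel :: "real^'n^'m \<Rightarrow> (real^'m) set" where
  "left_kernel M = {w. w v* M = 0}"

definition extend_vec :: "real \<Rightarrow> real^('y::finite \<times> 't::finite) \<Rightarrow> real^(('y \<times> 't) + 't)" where
  "extend_vec \<beta> v = (\<chi> i. case i of Inl p \<Rightarrow> v $ p
                                   | Inr t \<Rightarrow> (1 - \<beta>) / \<beta> * (\<Sum>y\<in>UNIV. v $ (y, t)))"

end

theory Submission
  imports Defs
begin

lemma right_kernel_orth:
  fixes M :: "real^'n^'m"
  shows "right_kernel M = {y \<in> UNIV. \<forall>x \<in> span (rows M). orthogonal x y}"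
proof (intro set_eqI iffI)
  fix y assume "y \<in> right_kernel M"
  then show "y \<in> {y \<in> UNIV. \<forall>x \<in> span (rows M). orthogonal x y}"
    by (auto simp: right_kernel_def) (metis orthogonal_nullspace_rowspace orthogonal_commute)
next
  fix y assume a: "y \<in> {y \<in> UNIV. \<forall>x \<in> span (rows M). orthogonal x y}"
  have "(M *v y) $ i = 0" for i
  proof -
    have "row i M \<in> span (rows M)" by (auto simp: rows_def intro: span_base)
    then have "orthogonal (row i M) y" using a by auto
    then show ?thesis
      by (simp add: orthogonal_def matrix_vector_mul_component row_def)
  qed
  then show "y \<in> right_kernel M" by (simp add: right_kernel_def vec_eq_iff)
qed

lemma dim_right_kernel:
  fixes M :: "real^'n^'m"
  shows "dim (right_kernel M) + rank M = CARD('n)"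
proof -
  have "dim {y \<in> UNIV. \<forall>x \<in> span (rows M). orthogonal x y} + dim (span (rows M)) = dim (UNIV :: (real^'n) set)"
    by (rule dim_subspace_orthogonal_to_vectors) (auto simp: subspace_span)
  moreover have "right_kernel M = {y. \<forall>x \<in> span (rows M). orthogonal x y}"
    using right_kernel_orth[of M] by simp
  ultimately show ?thesis
    by (simp add: row_rank_def dim_span)
qed

lemma dim_left_kernel:
  fixes M :: "real^'n^'m"
  shows "dim (left_kernel M) + rank M = CARD('m)"
proof -
  have "left_kernel M = right_kernel (transpose M)"
    by (simp add: left_kernel_def right_kernel_def)
  then show ?thesis using dim_right_kernel[of "transpose M"] rank_transpose[of M] by simp
qed

lemma dim_kernels_square:
  fixes M :: "real^'n^'n"
  shows "dim (right_kernel M) = dim (left_kernel M)"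
  using dim_right_kernel[of M] dim_left_kernel[of M] by simp

lemma kron_sum1 [simp]: "(\<Sum>t\<in>UNIV. kron t (a::'a::finite) * f t) = (f a :: real)"
proof -
  have "(\<Sum>t\<in>UNIV. kron t a * f t) = (\<Sum>t\<in>UNIV. if t = a then f a else 0)"
    by (rule sum.cong) (auto simp: kron_def)
  also have "\<dots> = f a" by simp
  finally show ?thesis .
qed
lemma kron_sum2 [simp]: "(\<Sum>t\<in>UNIV. kron (a::'a::finite) t * f t) = (f a :: real)"
proof -
  have "(\<Sum>t\<in>UNIV. kron a t * f t) = (\<Sum>t\<in>UNIV. if a = t then f a else 0)"
    by (rule sum.cong) (auto simp: kron_def)
  also have "\<dots> = f a" by simp
  finally show ?thesis .
qed
lemma kron_sum4: "(\<Sum>t\<in>UNIV. (1 - kron t (a::'a::finite) / d) * f t) = (\<Sum>t\<in>UNIV. f t) - (f a :: real) / d"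
proof -
  have "(\<Sum>t\<in>UNIV. (1 - kron t a / d) * f t) = (\<Sum>t\<in>UNIV. f t - kron t a * (f t / d))"
    by (rule sum.cong) (auto simp: algebra_simps)
  then show ?thesis by (simp add: sum_subtractf sum_divide_distrib[symmetric])
qed

lemma kron_sum5: "(\<Sum>s\<in>UNIV. (kron s (a::'a::finite) - kron b a) * g s) = g a - kron b a * (\<Sum>s\<in>UNIV. g s :: real)"
  by (simp add: left_diff_distrib sum_subtractf sum_distrib_left)

lemma kron_sum3 [simp]: "(\<Sum>t\<in>UNIV. kron t (a::'a::finite)) = (1::real)"
  using kron_sum1[of a "\<lambda>_. 1"] by simp

lemma sum_pair: "(\<Sum>p\<in>UNIV. f p) = (\<Sum>y\<in>UNIV. \<Sum>t\<in>UNIV. (f (y,t) :: real))"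
  by (simp add: sum.cartesian_product)

lemma sum_plus: "(\<Sum>i\<in>UNIV. (f :: ('a::finite + 'b::finite) \<Rightarrow> real) i) = (\<Sum>p\<in>UNIV. f (Inl p)) + (\<Sum>t\<in>UNIV. (f (Inr t) :: real))"
proof -
  have "(\<Sum>i\<in>UNIV. f i) = (\<Sum>i\<in>(UNIV <+> UNIV). f i)" by simp
  also have "\<dots> = (\<Sum>p\<in>UNIV. f (Inl p)) + (\<Sum>t\<in>UNIV. f (Inr t))"
    by (subst sum.Plus) (auto simp: comp_def)
  finally show ?thesis .
qed

lemma sum_snd: "(\<Sum>t\<in>UNIV. g t * (\<Sum>y\<in>UNIV. v (y,t))) = (\<Sum>p\<in>UNIV. g (snd p) * (v p :: real))"
proof -
  have "(\<Sum>p\<in>UNIV. g (snd p) * v p) = (\<Sum>y\<in>UNIV. \<Sum>t\<in>UNIV. g t * v (y,t))"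
    by (subst sum_pair) simp
  also have "\<dots> = (\<Sum>t\<in>UNIV. \<Sum>y\<in>UNIV. g t * v (y,t))" by (rule sum.swap)
  also have "\<dots> = (\<Sum>t\<in>UNIV. g t * (\<Sum>y\<in>UNIV. v (y,t)))" by (simp add: sum_distrib_left)
  finally show ?thesis by simp
qed

lemma vm_Inl: "(w v* (M::real^('a::finite + 'b::finite)^('a + 'b))) $ Inl q
   = (\<Sum>p\<in>UNIV. M $ Inl p $ Inl q * w $ Inl p) + (\<Sum>t\<in>UNIV. M $ Inr t $ Inl q * w $ Inr t)"
  unfolding vector_matrix_mult_def using sum_plus[where f="\<lambda>i. w $ i * M $ i $ Inl q"] by (simp add: mult.commute)

lemma vm_Inr: "(w v* (M::real^('a::finite + 'b::finite)^('a + 'b))) $ Inr q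
   = (\<Sum>p\<in>UNIV. M $ Inl p $ Inr q * w $ Inl p) + (\<Sum>t\<in>UNIV. M $ Inr t $ Inr q * w $ Inr t)"
  unfolding vector_matrix_mult_def using sum_plus[where f="\<lambda>i. w $ i * M $ i $ Inr q"] by (simp add: mult.commute)

lemma ext_Inl [simp]: "extend_vec b v $ Inl p = v $ p"
  by (simp add: extend_vec_def)
lemma ext_Inr [simp]: "extend_vec b v $ Inr t = (1 - b) / b * (\<Sum>y\<in>UNIV. v $ (y, t))"
  by (simp add: extend_vec_def)

lemma lk_iff: "w \<in> left_kernel (mat 1 - M) \<longleftrightarrow> w v* M = (w :: real^'n)"
  by (auto simp: left_kernel_def vector_matrix_mult_diff_rdistrib)

lemma linear_ext: "linear (extend_vec b :: real^('y::finite \<times> 't::finite) \<Rightarrow> _)"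
proof (rule linearI)
  fix x y :: "real^('y \<times> 't)" and c :: real
  have "(extend_vec b (x + y)) $ i = (extend_vec b x + extend_vec b y) $ i" for i
    by (cases i) (simp_all add: sum.distrib algebra_simps)
  then show "extend_vec b (x + y) = extend_vec b x + extend_vec b y" by (simp add: vec_eq_iff)
  have "(extend_vec b (c *\<^sub>R x)) $ i = (c *\<^sub>R extend_vec b x) $ i" for i
    by (cases i) (simp_all add: sum_distrib_left algebra_simps)
  then show "extend_vec b (c *\<^sub>R x) = c *\<^sub>R extend_vec b x" by (simp add: vec_eq_iff)
qed

lemma inj_ext: "inj (extend_vec b :: real^('y::finite \<times> 't::finite) \<Rightarrow> _)"
proof (rule injI)
  fix v v' :: "real^('y \<times> 't)" assume "extend_vec b v = extend_vec b v'"
  then have "extend_vec b v $ Inl p = extend_vec b v' $ Inl p" for p by simp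
  then show "v = v'" by (simp add: vec_eq_iff)
qed

context
  fixes pyx :: "'x::finite \<Rightarrow> 'y::finite \<Rightarrow> real" and px :: "'x \<Rightarrow> real"
    and enc :: "'x \<Rightarrow> 't::finite \<Rightarrow> real" and dec :: "'t \<Rightarrow> 'y \<Rightarrow> real"
    and marg :: "'t \<Rightarrow> real" and \<beta> :: real
  assumes joint: "is_joint_distribution pyx px"
    and px_pos: "\<forall>x. px x > 0"
    and beta_pos: "\<beta> > 0"
    and root: "is_IB_root \<beta> pyx px enc dec marg"
    and dec_pos: "\<forall>t y. dec t y > 0"
    and marg_pos: "\<forall>t. marg t > 0"
begin

abbreviation "iv \<equiv> inv_enc px enc marg"

lemma enc_sum: "(\<Sum>t\<in>UNIV. enc x t) = 1"
proof -
  let ?e = "\<lambda>t. exp (- \<beta> * KL (pyx x) (dec t))"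
  have Z: "IB_Z \<beta> pyx dec marg x = (\<Sum>t\<in>UNIV. marg t * ?e t)" by (simp add: IB_Z_def)
  have "IB_Z \<beta> pyx dec marg x > 0" unfolding Z
    by (rule sum_pos) (use marg_pos in auto)
  moreover have "(\<Sum>t\<in>UNIV. enc x t) = (\<Sum>t\<in>UNIV. marg t * ?e t) / IB_Z \<beta> pyx dec marg x"
  proof -
    have e: "enc x t = marg t / IB_Z \<beta> pyx dec marg x * ?e t" for t
      using root unfolding is_IB_root_def by blast
    show ?thesis unfolding e by (simp add: sum_divide_distrib)
  qed
  ultimately show ?thesis using Z by simp
qed

lemma iv_sum: "(\<Sum>x\<in>UNIV. iv t x) = 1"
proof -
  have "(\<Sum>x\<in>UNIV. iv t x) = (\<Sum>x\<in>UNIV. enc x t * px x) / marg t"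
    by (simp add: inv_enc_def sum_divide_distrib)
  also have "\<dots> = 1"
  proof -
    have m: "marg t = (\<Sum>x\<in>UNIV. enc x t * px x)" using root unfolding is_IB_root_def by blast
    have "marg t > 0" using marg_pos by simp
    then show ?thesis unfolding m[symmetric] by simp
  qed
  finally show ?thesis .
qed

lemma dec_eq: "dec t y = (\<Sum>x\<in>UNIV. pyx x y * iv t x)"
  using root unfolding is_IB_root_def by blast

lemma pyx_sum: "(\<Sum>y\<in>UNIV. pyx x y) = 1"
  using joint by (simp add: is_joint_distribution_def)

lemma dec_sum: "(\<Sum>y\<in>UNIV. dec t y) = 1"
proof -
  have "(\<Sum>y\<in>UNIV. dec t y) = (\<Sum>x\<in>UNIV. (\<Sum>y\<in>UNIV. pyx x y) * iv t x)"
    unfolding dec_eq sum_distrib_right by (rule sum.swap)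
  then show ?thesis by (simp add: pyx_sum iv_sum)
qed


abbreviation "AA \<equiv> IB_A px enc marg"
abbreviation "BB \<equiv> IB_B pyx px enc marg"
abbreviation "CC \<equiv> IB_C pyx px enc marg"
abbreviation "DD t y y' \<equiv> (\<Sum>x\<in>UNIV. pyx x y * pyx x y' * iv t x)"

lemma dec_nz: "dec t y \<noteq> 0" using dec_pos[rule_format, of t y] by simp

lemma sB_t: "(\<Sum>t'\<in>UNIV. BB t t' y) = dec t y"
proof -
  have "(\<Sum>t'\<in>UNIV. BB t t' y) = (\<Sum>x\<in>UNIV. \<Sum>t'\<in>UNIV. pyx x y * enc x t' * iv t x)"
    unfolding IB_B_def by (rule sum.swap)
  also have "\<dots> = (\<Sum>x\<in>UNIV. pyx x y * iv t x * (\<Sum>t'\<in>UNIV. enc x t'))"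
    by (simp only: sum_distrib_left) (simp add: mult_ac)
  also have "\<dots> = dec t y" by (simp add: enc_sum dec_eq)
  finally show ?thesis .
qed

lemma sA_t: "(\<Sum>t'\<in>UNIV. AA t t') = 1"
proof -
  have "(\<Sum>t'\<in>UNIV. AA t t') = (\<Sum>x\<in>UNIV. \<Sum>t'\<in>UNIV. enc x t' * iv t x)"
    unfolding IB_A_def by (rule sum.swap)
  also have "\<dots> = (\<Sum>x\<in>UNIV. iv t x * (\<Sum>t'\<in>UNIV. enc x t'))"
    by (simp only: sum_distrib_left) (simp add: mult_ac)
  also have "\<dots> = 1" by (simp add: enc_sum iv_sum)
  finally show ?thesis .
qed

lemma sC_t: "(\<Sum>t'\<in>UNIV. CC t t' y y') = DD t y y'"
proof -
  have "(\<Sum>t'\<in>UNIV. CC t t' y y') = (\<Sum>x\<in>UNIV. \<Sum>t'\<in>UNIV. pyx x y * pyx x y' * enc x t' * iv t x)"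
    unfolding IB_C_def by (rule sum.swap)
  also have "\<dots> = (\<Sum>x\<in>UNIV. pyx x y * pyx x y' * iv t x * (\<Sum>t'\<in>UNIV. enc x t'))"
    by (simp only: sum_distrib_left) (simp add: mult_ac)
  also have "\<dots> = DD t y y'" by (simp add: enc_sum)
  finally show ?thesis .
qed

lemma sB_y: "(\<Sum>y\<in>UNIV. BB t t' y) = AA t t'"
proof -
  have "(\<Sum>y\<in>UNIV. BB t t' y) = (\<Sum>x\<in>UNIV. \<Sum>y\<in>UNIV. pyx x y * enc x t' * iv t x)"
    unfolding IB_B_def by (rule sum.swap)
  also have "\<dots> = (\<Sum>x\<in>UNIV. enc x t' * iv t x * (\<Sum>y\<in>UNIV. pyx x y))"
    by (simp only: sum_distrib_left) (simp add: mult_ac)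
  also have "\<dots> = AA t t'" by (simp add: pyx_sum IB_A_def)
  finally show ?thesis .
qed

lemma sC_y1: "(\<Sum>y\<in>UNIV. CC t t' y y') = BB t t' y'"
proof -
  have "(\<Sum>y\<in>UNIV. CC t t' y y') = (\<Sum>x\<in>UNIV. \<Sum>y\<in>UNIV. pyx x y * pyx x y' * enc x t' * iv t x)"
    unfolding IB_C_def by (rule sum.swap)
  also have "\<dots> = (\<Sum>x\<in>UNIV. pyx x y' * enc x t' * iv t x * (\<Sum>y\<in>UNIV. pyx x y))"
    by (simp only: sum_distrib_left) (simp add: mult_ac)
  also have "\<dots> = BB t t' y'" by (simp add: pyx_sum IB_B_def)
  finally show ?thesis .
qed

lemma C_sym: "CC t t' y y' = CC t t' y' y"
  unfolding IB_C_def by (simp add: mult_ac)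

lemma sC_y2: "(\<Sum>y'\<in>UNIV. CC t t' y y') = BB t t' y"
  using sC_y1[of t t' y] by (simp add: C_sym)

lemma sD_y: "(\<Sum>y\<in>UNIV. DD t y y') = dec t y'"
proof -
  have "(\<Sum>y\<in>UNIV. DD t y y') = (\<Sum>x\<in>UNIV. \<Sum>y\<in>UNIV. pyx x y * pyx x y' * iv t x)"
    by (rule sum.swap)
  also have "\<dots> = (\<Sum>x\<in>UNIV. pyx x y' * iv t x * (\<Sum>y\<in>UNIV. pyx x y))"
    by (simp only: sum_distrib_left) (simp add: mult_ac)
  also have "\<dots> = dec t y'" by (simp add: pyx_sum dec_eq)
  finally show ?thesis .
qed

abbreviation "JJ \<equiv> IB_J \<beta> pyx px enc dec marg"
abbreviation "SS \<equiv> IB_S \<beta> pyx px enc dec marg"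

lemma J1: "JJ $ Inl (y,t) $ Inl (y',t') =
   \<beta> * (BB t t' y' - CC t t' y' y / dec t y - kron t t' * (dec t y' - DD t y' y / dec t y))"
proof -
  have "JJ $ Inl (y,t) $ Inl (y',t') = \<beta> * (\<Sum>t''\<in>UNIV. \<Sum>y''\<in>UNIV.
                 (kron t'' t' - kron t t') * (1 - kron y'' y / dec t y) * CC t t'' y' y'')"
    by (simp add: IB_J_def)
  also have "\<dots> = \<beta> * (\<Sum>t''\<in>UNIV. (kron t'' t' - kron t t') * (BB t t'' y' - CC t t'' y' y / dec t y))"
    by (simp add: mult.assoc sum_distrib_left[symmetric] kron_sum4 sC_y2)
  also have "\<dots> = \<beta> * (BB t t' y' - CC t t' y' y / dec t y - kron t t' * (dec t y' - DD t y' y / dec t y))"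
    by (simp add: kron_sum5 sum_subtractf sum_divide_distrib[symmetric] sB_t sC_t)
  finally show ?thesis .
qed

lemma J2: "JJ $ Inl (y,t) $ Inr t' = (1 - \<beta>) * (AA t t' - BB t t' y / dec t y)"
  by (simp add: IB_J_def kron_sum4 sB_y)

lemma J3: "JJ $ Inr t $ Inl (y',t') = \<beta> * (kron t t' * dec t y' - BB t t' y')"
  by (simp add: IB_J_def)

lemma J4: "JJ $ Inr t $ Inr t' = (1 - \<beta>) * (kron t t' - AA t t')"
  by (simp add: IB_J_def)

lemma S_entry: "SS $ (y,t) $ (y',t') =
   \<beta> / dec t y * (kron t t' * DD t y y' - CC t t' y y') + (1 - 2 * \<beta>) * (kron t t' * dec t y' - BB t t' y')"
proof -
  have "SS $ (y,t) $ (y',t') = (\<Sum>x\<in>UNIV. iv t x * (\<beta> * pyx x y / dec t y + (1 - 2 * \<beta>))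
        * pyx x y' * (kron t t' - enc x t'))"
    by (simp add: IB_S_def)
  also have "\<dots> = (\<Sum>x\<in>UNIV. \<beta> / dec t y * (kron t t' * (pyx x y * pyx x y' * iv t x) - pyx x y * pyx x y' * enc x t' * iv t x)
      + (1 - 2 * \<beta>) * (kron t t' * (pyx x y' * iv t x) - pyx x y' * enc x t' * iv t x))"
    using dec_nz[of t y] by (intro sum.cong refl) (simp add: field_simps)
  also have "\<dots> = \<beta> / dec t y * (kron t t' * DD t y y' - CC t t' y y') + (1 - 2 * \<beta>) * (kron t t' * dec t y' - BB t t' y')"
  proof -
    have X: "(\<Sum>x\<in>UNIV. kron t t' * (pyx x y * pyx x y' * iv t x) - pyx x y * pyx x y' * enc x t' * iv t x)
       = kron t t' * DD t y y' - CC t t' y y'"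
      by (simp add: sum_subtractf sum_distrib_left IB_C_def)
    have Y: "(\<Sum>x\<in>UNIV. kron t t' * (pyx x y' * iv t x) - pyx x y' * enc x t' * iv t x)
       = kron t t' * dec t y' - BB t t' y'"
      by (simp add: sum_subtractf sum_distrib_left IB_B_def dec_eq[of t y'])
    show ?thesis by (simp only: sum.distrib sum_distrib_left[symmetric] X Y)
  qed
  finally show ?thesis .
qed


lemma D_sym: "DD t y y' = DD t y' y"
  by (simp add: mult_ac)

lemma beta_nz: "\<beta> \<noteq> 0" using beta_pos by simp

lemma I1: "JJ $ Inl (y,t) $ Inl (y',t') + (1 - \<beta>) / \<beta> * JJ $ Inr t $ Inl (y',t') = SS $ (y,t) $ (y',t')"
  unfolding J1 J3 S_entry C_sym[of t t' y' y] D_sym[where t=t and y=y' and y'=y]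
  using beta_nz dec_nz[of t y] by (simp add: field_simps)

lemma I3: "(\<Sum>y'\<in>UNIV. JJ $ Inl (y,t) $ Inl (y',t')) = \<beta> * (AA t t' - BB t t' y / dec t y)"
proof -
  have "(\<Sum>y'\<in>UNIV. JJ $ Inl (y,t) $ Inl (y',t')) =
     \<beta> * (AA t t' - BB t t' y / dec t y - kron t t' * (1 - dec t y / dec t y))"
    unfolding J1
    by (simp add: sum_distrib_left[symmetric] sum_subtractf sum_divide_distrib[symmetric] sB_y sC_y1 dec_sum sD_y)
  then show ?thesis using dec_nz[of t y] by simp
qed

lemma I4: "(\<Sum>y'\<in>UNIV. JJ $ Inr t $ Inl (y',t')) = \<beta> * (kron t t' - AA t t')"
  unfolding J3
  by (simp add: sum_distrib_left[symmetric] sum_subtractf dec_sum sB_y)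

lemma I2: "JJ $ Inl (y,t) $ Inr t' + (1 - \<beta>) / \<beta> * JJ $ Inr t $ Inr t'
   = (1 - \<beta>) / \<beta> * (\<Sum>y'\<in>UNIV. SS $ (y,t) $ (y',t'))"
proof -
  have "(\<Sum>y'\<in>UNIV. SS $ (y,t) $ (y',t')) = (\<Sum>y'\<in>UNIV. JJ $ Inl (y,t) $ Inl (y',t'))
     + (1 - \<beta>) / \<beta> * (\<Sum>y'\<in>UNIV. JJ $ Inr t $ Inl (y',t'))"
    unfolding I1[symmetric] by (simp add: sum.distrib sum_distrib_left)
  also have "\<dots> = \<beta> * (AA t t' - BB t t' y / dec t y) + (1 - \<beta>) / \<beta> * (\<beta> * (kron t t' - AA t t'))"
    by (simp only: I3 I4)
  finally have e: "(\<Sum>y'\<in>UNIV. SS $ (y,t) $ (y',t')) = \<beta> * (AA t t' - BB t t' y / dec t y) + (1 - \<beta>) / \<beta> * (\<beta> * (kron t t' - AA t t'))" .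
  show ?thesis unfolding e J2 J4 using beta_nz by (simp add: field_simps)
qed


lemma colInl: "(extend_vec \<beta> v v* JJ) $ Inl q = (v v* SS) $ q"
proof -
  obtain y' t' where q: "q = (y',t')" by (cases q)
  let ?c = "(1 - \<beta>) / \<beta>"
  have "(\<Sum>t\<in>UNIV. JJ $ Inr t $ Inl q * (?c * (\<Sum>y\<in>UNIV. v $ (y,t))))
      = (\<Sum>p\<in>UNIV. (?c * JJ $ Inr (snd p) $ Inl q) * v $ p)"
    using sum_snd[of "\<lambda>t. ?c * JJ $ Inr t $ Inl q" "\<lambda>p. v $ p"] by (simp add: mult_ac)
  then have "(extend_vec \<beta> v v* JJ) $ Inl q = (\<Sum>p\<in>UNIV. (JJ $ Inl p $ Inl q + ?c * JJ $ Inr (snd p) $ Inl q) * v $ p)"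
    by (simp add: vm_Inl sum.distrib distrib_right)
  also have "\<dots> = (\<Sum>p\<in>UNIV. SS $ p $ q * v $ p)"
  proof (rule sum.cong[OF refl])
    fix p :: "'y \<times> 't" obtain y t where p: "p = (y,t)" by (cases p)
    show "(JJ $ Inl p $ Inl q + ?c * JJ $ Inr (snd p) $ Inl q) * v $ p = SS $ p $ q * v $ p"
      unfolding p q using I1[of y t y' t'] by simp
  qed
  also have "\<dots> = (v v* SS) $ q" by (simp add: vector_matrix_mult_def mult.commute)
  finally show ?thesis .
qed

lemma colInr:
  assumes hfix: "v v* SS = v"
  shows "(extend_vec \<beta> v v* JJ) $ Inr t' = (1 - \<beta>) / \<beta> * (\<Sum>y\<in>UNIV. v $ (y,t'))"
proof -
  let ?c = "(1 - \<beta>) / \<beta>"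
  have "(\<Sum>t\<in>UNIV. JJ $ Inr t $ Inr t' * (?c * (\<Sum>y\<in>UNIV. v $ (y,t))))
      = (\<Sum>p\<in>UNIV. (?c * JJ $ Inr (snd p) $ Inr t') * v $ p)"
    using sum_snd[of "\<lambda>t. ?c * JJ $ Inr t $ Inr t'" "\<lambda>p. v $ p"] by (simp add: mult_ac)
  then have "(extend_vec \<beta> v v* JJ) $ Inr t' = (\<Sum>p\<in>UNIV. (JJ $ Inl p $ Inr t' + ?c * JJ $ Inr (snd p) $ Inr t') * v $ p)"
    by (simp add: vm_Inr sum.distrib distrib_right)
  also have "\<dots> = (\<Sum>p\<in>UNIV. ?c * (\<Sum>y'\<in>UNIV. SS $ p $ (y',t') * v $ p))"
  proof (rule sum.cong[OF refl])
    fix p :: "'y \<times> 't" obtain y t where p: "p = (y,t)" by (cases p)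
    show "(JJ $ Inl p $ Inr t' + ?c * JJ $ Inr (snd p) $ Inr t') * v $ p = ?c * (\<Sum>y'\<in>UNIV. SS $ p $ (y',t') * v $ p)"
      unfolding p using I2[of y t t'] by (simp add: sum_distrib_right)
  qed
  also have "\<dots> = ?c * (\<Sum>y'\<in>UNIV. \<Sum>p\<in>UNIV. SS $ p $ (y',t') * v $ p)"
    by (subst sum.swap) (simp add: sum_distrib_left)
  also have "\<dots> = ?c * (\<Sum>y'\<in>UNIV. (v v* SS) $ (y',t'))"
    by (simp add: vector_matrix_mult_def mult.commute)
  also have "\<dots> = ?c * (\<Sum>y\<in>UNIV. v $ (y,t'))" using hfix by simp
  finally show ?thesis .
qed

lemma conv:
  assumes hfix: "w v* JJ = w"
  shows "w $ Inr t' = (1 - \<beta>) / \<beta> * (\<Sum>y\<in>UNIV. w $ Inl (y,t'))"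
proof -
  define K where "K = (\<Sum>p\<in>UNIV. (AA (snd p) t' - BB (snd p) t' (fst p) / dec (snd p) (fst p)) * w $ Inl p)
     + (\<Sum>t\<in>UNIV. (kron t t' - AA t t') * w $ Inr t)"
  have "(\<Sum>y\<in>UNIV. w $ Inl (y,t')) = (\<Sum>y\<in>UNIV. (w v* JJ) $ Inl (y,t'))" using hfix by simp
  also have "\<dots> = (\<Sum>y\<in>UNIV. \<Sum>p\<in>UNIV. JJ $ Inl p $ Inl (y,t') * w $ Inl p)
      + (\<Sum>y\<in>UNIV. \<Sum>t\<in>UNIV. JJ $ Inr t $ Inl (y,t') * w $ Inr t)"
    by (simp add: vm_Inl sum.distrib)
  also have "\<dots> = (\<Sum>p\<in>UNIV. (\<Sum>y\<in>UNIV. JJ $ Inl p $ Inl (y,t')) * w $ Inl p)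
      + (\<Sum>t\<in>UNIV. (\<Sum>y\<in>UNIV. JJ $ Inr t $ Inl (y,t')) * w $ Inr t)"
  proof -
    have s1: "(\<Sum>y\<in>UNIV. \<Sum>p\<in>UNIV. JJ $ Inl p $ Inl (y,t') * w $ Inl p) = (\<Sum>p\<in>UNIV. \<Sum>y\<in>UNIV. JJ $ Inl p $ Inl (y,t') * w $ Inl p)"
      by (rule sum.swap)
    have s2: "(\<Sum>y\<in>UNIV. \<Sum>t\<in>UNIV. JJ $ Inr t $ Inl (y,t') * w $ Inr t) = (\<Sum>t\<in>UNIV. \<Sum>y\<in>UNIV. JJ $ Inr t $ Inl (y,t') * w $ Inr t)"
      by (rule sum.swap)
    show ?thesis by (simp only: s1 s2 sum_distrib_right)
  qed
  also have "\<dots> = \<beta> * K"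
  proof -
    have a: "(\<Sum>y\<in>UNIV. JJ $ Inl p $ Inl (y,t')) = \<beta> * (AA (snd p) t' - BB (snd p) t' (fst p) / dec (snd p) (fst p))" for p
      using I3[of "fst p" "snd p" t'] by simp
    show ?thesis unfolding K_def a I4 by (simp add: sum_distrib_left distrib_left mult_ac)
  qed
  finally have E1: "(\<Sum>y\<in>UNIV. w $ Inl (y,t')) = \<beta> * K" .
  have "w $ Inr t' = (w v* JJ) $ Inr t'" using hfix by simp
  also have "\<dots> = (1 - \<beta>) * K"
  proof -
    have a: "JJ $ Inl p $ Inr t' = (1 - \<beta>) * (AA (snd p) t' - BB (snd p) t' (fst p) / dec (snd p) (fst p))" for p
      using J2[of "fst p" "snd p" t'] by simp
    show ?thesis unfolding vm_Inr K_def a J4 by (simp add: sum_distrib_left distrib_left mult_ac)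
  qed
  finally have E2: "w $ Inr t' = (1 - \<beta>) * K" .
  show ?thesis unfolding E1 E2 using beta_nz by simp
qed


lemma bij_part: "bij_betw (extend_vec \<beta>) (left_kernel (mat 1 - SS)) (left_kernel (mat 1 - JJ))"
proof (rule bij_betw_imageI)
  show "inj_on (extend_vec \<beta>) (left_kernel (mat 1 - SS))"
  proof (rule inj_onI)
    fix v v' assume "extend_vec \<beta> v = extend_vec \<beta> v'"
    then have "extend_vec \<beta> v $ Inl p = extend_vec \<beta> v' $ Inl p" for p by simp
    then show "v = v'" by (simp add: vec_eq_iff)
  qed
  show "extend_vec \<beta> ` left_kernel (mat 1 - SS) = left_kernel (mat 1 - JJ)"
  proof (intro set_eqI iffI)
    fix w assume "w \<in> extend_vec \<beta> ` left_kernel (mat 1 - SS)"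
    then obtain v where w: "w = extend_vec \<beta> v" and v: "v v* SS = v" by (auto simp: lk_iff)
    have "(extend_vec \<beta> v v* JJ) $ i = extend_vec \<beta> v $ i" for i
    proof (cases i)
      case (Inl q) then show ?thesis using colInl[of v q] v by simp
    next
      case (Inr t) then show ?thesis using colInr[OF v, of t] by simp
    qed
    then show "w \<in> left_kernel (mat 1 - JJ)" unfolding w lk_iff by (simp add: vec_eq_iff)
  next
    fix w assume "w \<in> left_kernel (mat 1 - JJ)"
    then have wf: "w v* JJ = w" by (simp add: lk_iff)
    define v where "v = (\<chi> p. w $ Inl p)"
    have wv: "w = extend_vec \<beta> v"
    proof -
      have "w $ i = extend_vec \<beta> v $ i" for i
      proof (cases i)
        case (Inl q) then show ?thesis by (simp add: v_def)
      next
        case (Inr t) then show ?thesis using conv[OF wf, of t] by (simp add: v_def)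
      qed
      then show ?thesis by (simp add: vec_eq_iff)
    qed
    have "(v v* SS) $ q = v $ q" for q
    proof -
      have "(v v* SS) $ q = (w v* JJ) $ Inl q" using colInl[of v q] wv by simp
      also have "\<dots> = v $ q" using wf by (simp add: v_def)
      finally show ?thesis .
    qed
    then have "v \<in> left_kernel (mat 1 - SS)" by (simp add: lk_iff vec_eq_iff)
    then show "w \<in> extend_vec \<beta> ` left_kernel (mat 1 - SS)" using wv by blast
  qed
qed

end


theorem lemma1:
  fixes pyx :: "'x::finite \<Rightarrow> 'y::finite \<Rightarrow> real" and px :: "'x \<Rightarrow> real"
    and enc :: "'x \<Rightarrow> 't::finite \<Rightarrow> real" and dec :: "'t \<Rightarrow> 'y \<Rightarrow> real"
    and marg :: "'t \<Rightarrow> real" and \<beta> :: real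
  assumes joint: "is_joint_distribution pyx px"
    and px_pos: "\<forall>x. px x > 0"
    and beta_pos: "\<beta> > 0"
    and root: "is_IB_root \<beta> pyx px enc dec marg"
    and dec_pos: "\<forall>t y. dec t y > 0"
    and marg_pos: "\<forall>t. marg t > 0"
  shows "dim (right_kernel (mat 1 - IB_S \<beta> pyx px enc dec marg))
           = dim (right_kernel (mat 1 - IB_J \<beta> pyx px enc dec marg))
         \<and> bij_betw (extend_vec \<beta>)
             (left_kernel (mat 1 - IB_S \<beta> pyx px enc dec marg))
             (left_kernel (mat 1 - IB_J \<beta> pyx px enc dec marg))"
proof -
  let ?S = "IB_S \<beta> pyx px enc dec marg" and ?J = "IB_J \<beta> pyx px enc dec marg"
  have B: "bij_betw (extend_vec \<beta>) (left_kernel (mat 1 - ?S)) (left_kernel (mat 1 - ?J))"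
    by (rule bij_part[OF joint px_pos beta_pos root dec_pos marg_pos])
  have "dim (right_kernel (mat 1 - ?S)) = dim (left_kernel (mat 1 - ?S))"
    by (rule dim_kernels_square)
  also have "\<dots> = dim (extend_vec \<beta> ` left_kernel (mat 1 - ?S))"
    by (rule dim_image_eq[symmetric]) (auto intro: linear_ext inj_on_subset[OF inj_ext])
  also have "\<dots> = dim (left_kernel (mat 1 - ?J))"
    using B by (simp add: bij_betw_def)
  also have "\<dots> = dim (right_kernel (mat 1 - ?J))"
    by (rule dim_kernels_square[symmetric])
  finally show ?thesis using B by simp
qed

end
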